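(* Let $G$ be a graph containing a $2$-factor, and let $F$ be a $2$-factor of $G$ whose number of components is minimum among all $2$-factors of $G$. Let $x\in V(G)$ be such that there exists a $2$-factor $F'$ of $G-x$ with $\omega(F')<\omega(F)$ (such $x$ is called co-absorbable). Then $d_G(x)\le \alpha(G)-1$.
   Context: All graphs are finite, simple and undirected. A $2$-factor of a graph is a spanning subgraph in which every vertex has degree $2$ (equivalently, every component is a cycle). $\omega(H)$ denotes the number of connected components of $H$, $d_G(x)$ the degree of $x$ in $G$, and $\alpha(G)$ the independence number of $G$. *)

theory Defs
  imports Main
begin

definition simple_graph :: "'a set \<Rightarrow> 'a set set \<Rightarrow> bool" where
  "simple_graph V E \<longleftrightarrow> finite V \<and> (\<forall>e\<in>E. \<exists>u v. e = {u, v} \<and> u \<noteq> v \<and> u \<in> V \<and> v \<in> V)"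

definition degree :: "'a set set \<Rightarrow> 'a \<Rightarrow> nat" where
  "degree E x = card {e \<in> E. x \<in> e}"

definition two_factor :: "'a set \<Rightarrow> 'a set set \<Rightarrow> 'a set set \<Rightarrow> bool" where
  "two_factor V E F \<longleftrightarrow> F \<subseteq> E \<and> (\<forall>v\<in>V. degree F v = 2)"

definition reach :: "'a set set \<Rightarrow> 'a \<Rightarrow> 'a \<Rightarrow> bool" where
  "reach F = (\<lambda>u v. {u, v} \<in> F)\<^sup>*\<^sup>*"

definition num_components :: "'a set \<Rightarrow> 'a set set \<Rightarrow> nat" where
  "num_components V F = card {{w \<in> V. reach F v w} | v. v \<in> V}"

definition independent :: "'a set \<Rightarrow> 'a set set \<Rightarrow> 'a set \<Rightarrow> bool" where
  "independent V E S \<longleftrightarrow> S \<subseteq> V \<and> (\<forall>u\<in>S. \<forall>v\<in>S. {u, v} \<notin> E)"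

definition alpha :: "'a set \<Rightarrow> 'a set set \<Rightarrow> nat" where
  "alpha V E = Max {card S | S. independent V E S}"

definition del_edges :: "'a set set \<Rightarrow> 'a \<Rightarrow> 'a set set" where
  "del_edges E x = {e \<in> E. x \<notin> e}"

end

theory Submission
  imports Defs
begin


definition nbr :: "'a set set \<Rightarrow> 'a \<Rightarrow> 'a set" where
  "nbr H v = {u. {v,u} \<in> H}"

definition wfg :: "'a set \<Rightarrow> 'a set set \<Rightarrow> bool" where
  "wfg W H \<longleftrightarrow> (\<forall>e\<in>H. \<exists>u v. e = {u,v} \<and> u \<noteq> v \<and> u \<in> W \<and> v \<in> W)"

definition orient :: "'a set \<Rightarrow> 'a set set \<Rightarrow> ('a \<Rightarrow> 'a) \<Rightarrow> bool" where
  "orient W H s \<longleftrightarrow> inj_on s W \<and> (\<forall>v\<in>W. s v \<in> nbr H v \<and> s (s v) \<noteq> v)"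

lemma nbr_sym: "u \<in> nbr H v \<longleftrightarrow> v \<in> nbr H u"
  by (simp add: nbr_def insert_commute)

lemma nbr_W: "wfg W H \<Longrightarrow> u \<in> nbr H v \<Longrightarrow> u \<in> W \<and> v \<in> W \<and> u \<noteq> v"
  unfolding wfg_def nbr_def by (auto simp: doubleton_eq_iff)

lemma wfg_mono: "wfg W H \<Longrightarrow> H' \<subseteq> H \<Longrightarrow> wfg W H'"
  unfolding wfg_def by blast

lemma degree_nbr:
  assumes "wfg W H" shows "degree H v = card (nbr H v)"
proof -
  have "{e\<in>H. v\<in>e} = (\<lambda>u. {v,u}) ` nbr H v"
  proof
    show "{e\<in>H. v\<in>e} \<subseteq> (\<lambda>u. {v,u}) ` nbr H v"
    proof
      fix e assume "e \<in> {e\<in>H. v\<in>e}"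
      then have e: "e \<in> H" "v \<in> e" by auto
      then obtain p q where "e = {p,q}" using assms unfolding wfg_def by blast
      then show "e \<in> (\<lambda>u. {v,u}) ` nbr H v" using e
        by (auto simp: nbr_def insert_commute image_iff)
    qed
  qed (auto simp: nbr_def)
  moreover have "inj_on (\<lambda>u. {v,u}) (nbr H v)"
    by (auto simp: inj_on_def doubleton_eq_iff)
  ultimately show ?thesis unfolding degree_def by (simp add: card_image)
qed

lemma orient_surj:
  assumes "finite W" "wfg W H" "orient W H s"
  shows "s ` W = W"
proof -
  have "s ` W \<subseteq> W"
  proof
    fix y assume "y \<in> s ` W"
    then obtain w where w: "w \<in> W" "y = s w" by blast
    then have "s w \<in> nbr H w" using assms(3) unfolding orient_def by blast
    then show "y \<in> W" using nbr_W[OF assms(2)] w by blast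
  qed
  then show ?thesis using endo_inj_surj assms unfolding orient_def by blast
qed

lemma orient_cover:
  assumes "finite W" "wfg W H" "\<forall>v\<in>W. card (nbr H v) = 2" "orient W H s"
    and "w \<in> nbr H u"
  shows "w = s u \<or> u = s w"
proof -
  have uW: "u \<in> W" using nbr_W[OF assms(2,5)] by blast
  then obtain p where p: "p \<in> W" "s p = u" using orient_surj[OF assms(1,2,4)] by force
  have "u \<in> nbr H p" using p assms(4) unfolding orient_def by auto
  then have pn: "p \<in> nbr H u" by (simp add: nbr_sym)
  have su: "s u \<in> nbr H u" using uW assms(4) unfolding orient_def by auto
  have ne: "s u \<noteq> p" using p assms(4) unfolding orient_def by auto
  have "card (nbr H u) = 2" using assms(3) uW by auto
  then have "nbr H u = {s u, p}" using pn su ne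
    by (smt (verit) card_2_iff doubleton_eq_iff insertE singletonD)
  then show ?thesis using assms(5) p by auto
qed




lemma orient_exists:
  "finite W \<Longrightarrow> wfg W H \<Longrightarrow> \<forall>v\<in>W. card (nbr H v) = 2 \<Longrightarrow> \<exists>s. orient W H s"
proof (induction "card W" arbitrary: W H rule: less_induct)
  case less
  show ?case
  proof (cases "W = {}")
    case True
    then show ?thesis unfolding orient_def by auto
  next
    case False
    then obtain v where vW: "v \<in> W" by auto
    then obtain a b where ab: "nbr H v = {a,b}" "a \<noteq> b"
      using less.prems(3) card_2_iff by metis
    have aW: "a \<in> W" "a \<noteq> v" "b \<in> W" "b \<noteq> v"
      using nbr_W[OF less.prems(2), of a v] nbr_W[OF less.prems(2), of b v] ab by auto
    have va: "v \<in> nbr H a" "v \<in> nbr H b"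
      using ab nbr_sym[of a H v] nbr_sym[of b H v] by auto
    show ?thesis
    proof (cases "{a,b} \<in> H")
      case True
      define W' where "W' = W - {v,a,b}"
      define H' where "H' = H - {{v,a},{v,b},{a,b}}"
      have na: "nbr H a = {v,b}"
      proof -
        have "b \<in> nbr H a" using True by (simp add: nbr_def)
        then show ?thesis using va(1) less.prems(3) aW ab(2)
          by (smt (verit) card_2_iff doubleton_eq_iff insertE singletonD)
      qed
      have nb: "nbr H b = {v,a}"
      proof -
        have "b \<in> nbr H a" using True by (simp add: nbr_def)
        then have "a \<in> nbr H b" using nbr_sym by metis
        then show ?thesis using va(2) less.prems(3) aW ab(2)
          by (smt (verit) card_2_iff doubleton_eq_iff insertE singletonD)
      qed
      have nH': "nbr H' u = nbr H u" if "u \<in> W'" for u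
        using that unfolding H'_def W'_def nbr_def by (auto simp: doubleton_eq_iff)
      have wf': "wfg W' H'"
        unfolding wfg_def
      proof
        fix e assume e: "e \<in> H'"
        then have eH: "e \<in> H" "e \<notin> {{v,a},{v,b},{a,b}}" unfolding H'_def by auto
        then obtain p q where pq: "e = {p,q}" "p \<noteq> q" "p \<in> W" "q \<in> W"
          using less.prems(2) unfolding wfg_def by blast
        have qp: "q \<in> nbr H p" using eH pq by (simp add: nbr_def)
        then have pq2: "p \<in> nbr H q" using nbr_sym by metis
        have "p \<notin> {v,a,b}"
        proof
          assume "p \<in> {v,a,b}"
          then show False using qp ab na nb eH pq by (auto simp: doubleton_eq_iff)
        qed
        moreover have "q \<notin> {v,a,b}"
        proof
          assume "q \<in> {v,a,b}"
          then show False using pq2 ab na nb eH pq by (auto simp: doubleton_eq_iff)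
        qed
        ultimately show "\<exists>u w. e = {u,w} \<and> u \<noteq> w \<and> u \<in> W' \<and> w \<in> W'"
          using pq unfolding W'_def by blast
      qed
      have "card W' < card W" unfolding W'_def using vW less.prems(1)
        by (intro psubset_card_mono) auto
      moreover have "finite W'" using less.prems(1) W'_def by auto
      moreover have "\<forall>u\<in>W'. card (nbr H' u) = 2" using nH' less.prems(3) W'_def by auto
      ultimately obtain s' where s': "orient W' H' s'" using less.hyps wf' by blast
      define s where "s = s'(v := a, a := b, b := v)"
      have s'W1: "s' u \<in> nbr H' u" "s' (s' u) \<noteq> u" if "u \<in> W'" for u
        using s' that unfolding orient_def by blast+
      have s'W: "s' u \<in> W'" "s' u \<in> nbr H u" "s' (s' u) \<noteq> u" if "u \<in> W'" for u
        using nbr_W[OF wf' s'W1(1)[OF that]] s'W1[OF that] nH'[OF that] by auto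
      have "orient W H s"
        unfolding orient_def
      proof (intro conjI ballI)
        have inj': "inj_on s' W'" using s' unfolding orient_def by blast
        have sv: "s v = a" "s a = b" "s b = v" using aW ab(2) by (auto simp: s_def)
        have so: "s u = s' u" "s u \<in> W'" if "u \<in> W" "u \<notin> {v,a,b}" for u
          using that s'W(1)[of u] unfolding s_def W'_def by auto
        show "inj_on s W"
        proof (rule inj_onI)
          fix u w assume u: "u \<in> W" and w: "w \<in> W" and e: "s u = s w"
          show "u = w"
          proof (cases "u \<in> {v,a,b}")
            case True
            show ?thesis
            proof (cases "w \<in> {v,a,b}")
              case True
              then show ?thesis using \<open>u \<in> {v,a,b}\<close> sv e aW ab(2) by auto
            next
              case False
              then have "s w \<in> W'" using so w by blast
              moreover have "s u \<in> {v,a,b}" using True sv by auto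
              ultimately show ?thesis using e unfolding W'_def by auto
            qed
          next
            case False
            show ?thesis
            proof (cases "w \<in> {v,a,b}")
              case True
              then have "s u \<in> W'" using so u False by blast
              moreover have "s w \<in> {v,a,b}" using True sv by auto
              ultimately show ?thesis using e unfolding W'_def by auto
            next
              case F2: False
              then have "s' u = s' w" using so u w e False by metis
              moreover have "u \<in> W'" "w \<in> W'" using u w False F2 unfolding W'_def by auto
              ultimately show ?thesis using inj' inj_onD by metis
            qed
          qed
        qed
      next
        fix u assume u: "u \<in> W"
        show "s u \<in> nbr H u"
          using u s'W ab na nb unfolding s_def W'_def by auto
        show "s (s u) \<noteq> u"
          using u s'W ab aW unfolding s_def W'_def by auto
      qed
      then show ?thesis by blast
    next
      case False
      define W' where "W' = W - {v}"
      define H' where "H' = (H - {{v,a},{v,b}}) \<union> {{a,b}}"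
      have nH': "nbr H' u = nbr H u" if "u \<in> W'" "u \<noteq> a" "u \<noteq> b" for u
        using that unfolding H'_def W'_def nbr_def by (auto simp: doubleton_eq_iff)
      have nHa: "nbr H' a = insert b (nbr H a - {v})"
        using aW ab unfolding H'_def nbr_def by (auto simp: doubleton_eq_iff)
      have nHb: "nbr H' b = insert a (nbr H b - {v})"
        using aW ab unfolding H'_def nbr_def by (auto simp: doubleton_eq_iff)
      have bna1: "b \<notin> nbr H a" using False by (simp add: nbr_def)
      have bna: "b \<notin> nbr H a" "a \<notin> nbr H b" using bna1 nbr_sym[of a H b] by auto
      have wf': "wfg W' H'"
        unfolding wfg_def
      proof
        fix e assume e: "e \<in> H'"
        show "\<exists>u w. e = {u,w} \<and> u \<noteq> w \<and> u \<in> W' \<and> w \<in> W'"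
        proof (cases "e = {a,b}")
          case True then show ?thesis using aW ab W'_def by auto
        next
          case False
          then have eH: "e \<in> H" "e \<noteq> {v,a}" "e \<noteq> {v,b}" using e H'_def by auto
          then obtain p q where pq: "e = {p,q}" "p \<noteq> q" "p \<in> W" "q \<in> W"
            using less.prems(2) unfolding wfg_def by blast
          have qp: "q \<in> nbr H p" using eH pq by (simp add: nbr_def)
          then have pq2: "p \<in> nbr H q" using nbr_sym by metis
          have "p \<noteq> v"
          proof
            assume pv: "p = v"
            then have "q \<in> {a,b}" using qp ab by simp
            then have "e = {v,a} \<or> e = {v,b}" using pq(1) pv by blast
            then show False using eH by blast
          qed
          moreover have "q \<noteq> v"
          proof
            assume qv: "q = v"
            then have "p \<in> {a,b}" using pq2 ab by simp
            moreover have "e = {q,p}" using pq(1) insert_commute[of p q] by simp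
            ultimately have "e = {v,a} \<or> e = {v,b}" using qv by blast
            then show False using eH by blast
          qed
          ultimately show ?thesis using pq unfolding W'_def by blast
        qed
      qed
      have "card W' < card W" unfolding W'_def using vW less.prems(1)
        by (intro psubset_card_mono) auto
      moreover have "finite W'" using less.prems(1) W'_def by auto
      moreover have "\<forall>u\<in>W'. card (nbr H' u) = 2"
      proof
        fix u assume u: "u \<in> W'"
        have fin: "finite (nbr H u)" if "u \<in> W" for u
          using less.prems(3) that by (intro card_ge_0_finite) auto
        show "card (nbr H' u) = 2"
        proof (cases "u = a \<or> u = b")
          case True
          then show ?thesis
          proof
            assume "u = a"
            then show ?thesis using nHa bna va fin[of a] aW less.prems(3)
              by (simp add: card.insert_remove card_Diff_singleton)
          next
            assume "u = b"
            then show ?thesis using nHb bna va fin[of b] aW less.prems(3)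
              by (simp add: card.insert_remove card_Diff_singleton)
          qed
        next
          case False
          then show ?thesis using nH' u less.prems(3) W'_def by auto
        qed
      qed
      ultimately obtain s' where s': "orient W' H' s'" using less.hyps wf' by blast
      have abW': "a \<in> W'" "b \<in> W'" using aW W'_def by auto
      have s'W1: "s' u \<in> nbr H' u" "s' (s' u) \<noteq> u" if "u \<in> W'" for u
        using s' that unfolding orient_def by blast+
      have s'W: "s' u \<in> W'" "s' u \<in> nbr H' u" "s' (s' u) \<noteq> u" if "u \<in> W'" for u
        using nbr_W[OF wf' s'W1(1)[OF that]] s'W1[OF that] by auto
      have "b \<in> nbr H' a" using nHa by auto
      then have "b = s' a \<or> a = s' b"
        using orient_cover[OF \<open>finite W'\<close> wf' \<open>\<forall>u\<in>W'. card (nbr H' u) = 2\<close> s'] by blast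
      then have "\<exists>a' b'. {a',b'} = {a,b} \<and> s' a' = b'"
      proof
        assume "b = s' a" then show ?thesis by auto
      next
        assume "a = s' b"
        moreover have "{b,a} = {a,b}" by (rule insert_commute)
        ultimately show ?thesis by auto
      qed
      then obtain a' b' where ab': "{a',b'} = {a,b}" "s' a' = b'" by blast
      have a'b': "a' \<noteq> b'" "a' \<in> W'" "b' \<in> W'" "nbr H v = {a',b'}" "a' \<noteq> v" "b' \<noteq> v"
        using ab' ab aW abW' by (auto simp: doubleton_eq_iff)
      have nH'': "nbr H' u = nbr H u" if "u \<in> W'" "u \<noteq> a'" "u \<noteq> b'" for u
        using nH' that ab' by (auto simp: doubleton_eq_iff)
      have nHb': "nbr H' b' = insert a' (nbr H b' - {v})"
        using nHa nHb ab' by (auto simp: doubleton_eq_iff)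
      have vn: "v \<in> nbr H a'" using a'b' nbr_sym[of a' H v] by auto
      define s where "s = s'(a' := v, v := b')"
      have sb: "s' b' \<in> nbr H b'" using s'W[of b'] a'b' ab' nHb' by auto
      have inj': "inj_on s' W'" using s' unfolding orient_def by blast
      have s'ne: "s' u \<noteq> b'" if "u \<in> W'" "u \<noteq> a'" for u
        using inj_onD[OF inj' _ that(1) a'b'(2)] ab'(2) that(2) by auto
      have "orient W H s"
        unfolding orient_def
      proof (intro conjI ballI)
        have sv: "s v = b'" "s a' = v" using a'b' by (auto simp: s_def)
        have so: "s u = s' u" "s u \<in> W'" "s u \<noteq> b'" if "u \<in> W" "u \<noteq> v" "u \<noteq> a'" for u
          using that s'W(1)[of u] s'ne[of u] unfolding s_def W'_def by auto
        show "inj_on s W"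
        proof (rule inj_onI)
          fix u w assume u: "u \<in> W" and w: "w \<in> W" and e: "s u = s w"
          show "u = w"
          proof (cases "u \<in> {v,a'}")
            case True
            show ?thesis
            proof (cases "w \<in> {v,a'}")
              case True
              then show ?thesis using \<open>u \<in> {v,a'}\<close> sv e a'b' by auto
            next
              case False
              then have "s w \<in> W'" "s w \<noteq> b'" using so w by auto
              then show ?thesis using e True sv unfolding W'_def by auto
            qed
          next
            case False
            show ?thesis
            proof (cases "w \<in> {v,a'}")
              case True
              have "s u \<in> W'" "s u \<noteq> b'" using so u False by auto
              then show ?thesis using e True sv unfolding W'_def by auto
            next
              case F2: False
              then have "s' u = s' w" using so u w e False by auto
              moreover have "u \<in> W'" "w \<in> W'" using u w False F2 unfolding W'_def by auto
              ultimately show ?thesis using inj' inj_onD by metis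
            qed
          qed
        qed
      next
        fix u assume u: "u \<in> W"
        show "s u \<in> nbr H u"
        proof -
          consider "u = v" | "u = a'" | "u = b'" | "u \<in> W'" "u \<noteq> a'" "u \<noteq> b'"
            using u unfolding W'_def by blast
          then show ?thesis
          proof cases
            case 1 then show ?thesis using a'b' by (simp add: s_def)
          next
            case 2 then show ?thesis using a'b' vn by (simp add: s_def)
          next
            case 3 then show ?thesis using a'b' sb by (simp add: s_def)
          next
            case 4 then show ?thesis using a'b' s'W(2)[of u] nH''[of u] by (simp add: s_def W'_def)
          qed
        qed
        show "s (s u) \<noteq> u"
          using u s'W a'b' ab' unfolding s_def W'_def by auto
      qed
      then show ?thesis by blast
    qed
  qed
qed




lemma reach_edge: "{u,v} \<in> F \<Longrightarrow> reach F u v"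
  unfolding reach_def by auto

lemma reach_refl: "reach F u u"
  unfolding reach_def by auto

lemma reach_trans: "reach F u v \<Longrightarrow> reach F v w \<Longrightarrow> reach F u w"
  unfolding reach_def by auto

lemma reach_sym: "reach F u v \<Longrightarrow> reach F v u"
  unfolding reach_def
proof (induction rule: rtranclp.induct)
  case (rtrancl_refl a) then show ?case by auto
next
  case (rtrancl_into_rtrancl a b c)
  then have "{c,b} \<in> F" using insert_commute[of b c] by simp
  then show ?case using rtrancl_into_rtrancl(3)
    by (meson converse_rtranclp_into_rtranclp)
qed

lemma comp_le:
  assumes fin: "finite W" and sub: "W \<subseteq> V"
    and toW: "\<forall>v\<in>V. \<exists>w\<in>W. reach F2 v w"
    and lift: "\<forall>u\<in>W. \<forall>w\<in>W. reach F1 u w \<longrightarrow> reach F2 u w"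
  shows "num_components V F2 \<le> num_components W F1"
proof -
  define c2 where "c2 v = {w\<in>V. reach F2 v w}" for v
  define c1 where "c1 v = {w\<in>W. reach F1 v w}" for v
  have c2eq: "c2 v = c2 w" if "reach F2 v w" for v w
  proof -
    have "reach F2 v z \<longleftrightarrow> reach F2 w z" for z
      using that reach_sym[OF that] reach_trans[of F2 v w z] reach_trans[of F2 w v z] by blast
    then show ?thesis unfolding c2_def by simp
  qed
  have C2: "{{w \<in> V. reach F2 v w} | v. v \<in> V} = c2 ` W"
  proof
    show "{{w \<in> V. reach F2 v w} | v. v \<in> V} \<subseteq> c2 ` W"
    proof
      fix K assume "K \<in> {{w \<in> V. reach F2 v w} | v. v \<in> V}"
      then obtain v where v: "v \<in> V" "K = c2 v" unfolding c2_def by blast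
      then obtain w where "w \<in> W" "reach F2 v w" using toW by blast
      then show "K \<in> c2 ` W" using v c2eq[of v w] by blast
    qed
  next
    show "c2 ` W \<subseteq> {{w \<in> V. reach F2 v w} | v. v \<in> V}"
      using sub unfolding c2_def by blast
  qed
  have C1: "{{w \<in> W. reach F1 v w} | v. v \<in> W} = c1 ` W"
    unfolding c1_def by blast
  define g where "g K = c2 (SOME u. u \<in> W \<and> c1 u = K)" for K
  have "c2 ` W = g ` (c1 ` W)"
  proof -
    have "c2 u = g (c1 u)" if u: "u \<in> W" for u
    proof -
      have ex: "\<exists>u'. u' \<in> W \<and> c1 u' = c1 u" using u by blast
      define u' where "u' = (SOME u'. u' \<in> W \<and> c1 u' = c1 u)"
      have u': "u' \<in> W" "c1 u' = c1 u" using someI_ex[OF ex] unfolding u'_def[symmetric] by auto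
      have gu: "g (c1 u) = c2 u'" unfolding g_def u'_def by simp
      have "u \<in> c1 u" using u reach_refl unfolding c1_def by fast
      then have "u \<in> c1 u'" using u' by simp
      then have "reach F1 u' u" unfolding c1_def by simp
      then have "reach F2 u' u" using lift u u' by simp
      then show ?thesis using gu c2eq[of u' u] by simp
    qed
    then show ?thesis by (auto simp: image_iff)
  qed
  then have "card (c2 ` W) \<le> card (c1 ` W)" using fin by (simp add: card_image_le)
  then show ?thesis unfolding num_components_def C1 C2 .
qed

lemma walk:
  assumes "\<forall>w\<in>W - T. s w \<in> W \<and> {w, s w} \<in> F"
  shows "u \<in> W \<Longrightarrow> (s^^k) u \<in> T \<Longrightarrow> \<exists>t\<in>T. reach F u t"
proof (induction k arbitrary: u)
  case 0 then show ?case using reach_refl by fastforce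
next
  case (Suc k)
  show ?case
  proof (cases "u \<in> T")
    case True then show ?thesis using reach_refl by fast
  next
    case False
    then have "s u \<in> W" "{u, s u} \<in> F" using assms Suc.prems by auto
    moreover have "(s^^k) (s u) \<in> T" using Suc.prems funpow_swap1[of s k u] by simp
    ultimately obtain t where "t \<in> T" "reach F (s u) t" using Suc.IH by blast
    moreover have "reach F u (s u)" using reach_edge \<open>{u, s u} \<in> F\<close> by metis
    ultimately show ?thesis using reach_trans by metis
  qed
qed

lemma orbit:
  assumes fin: "finite W" and sW: "\<forall>w\<in>W. s w \<in> W" and inj: "inj_on s W" and y: "y \<in> W"
  shows "\<exists>k. (s^^k) (s y) = y"
proof -
  have pw: "(s^^n) y \<in> W" for n by (induction n) (use y sW in auto)
  have "\<not> inj (\<lambda>n. (s^^n) y)"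
  proof
    assume "inj (\<lambda>n. (s^^n) y)"
    moreover have "finite (range (\<lambda>n. (s^^n) y))"
      by (rule finite_subset[OF _ fin]) (use pw in auto)
    ultimately have "finite (UNIV :: nat set)" using finite_imageD[of "\<lambda>n. (s^^n) y" UNIV] by simp
    then show False by simp
  qed
  then obtain i j where ij: "i \<noteq> j" "(s^^i) y = (s^^j) y" unfolding inj_def by blast
  have "\<exists>i d. (s^^i) y = (s^^(i + Suc d)) y"
  proof (cases "i < j")
    case True
    then obtain d where "j = i + Suc d" using less_iff_Suc_add by auto
    then show ?thesis using ij by blast
  next
    case False
    then have "j < i" using ij(1) by simp
    then obtain d where "i = j + Suc d" using less_iff_Suc_add by auto
    then show ?thesis using ij by metis
  qed
  then obtain i d where id: "(s^^i) y = (s^^(i + Suc d)) y" by blast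
  have "(s^^i) y = (s^^(i + Suc d)) y \<Longrightarrow> y = (s^^Suc d) y" for i
  proof (induction i)
    case 0 then show ?case by simp
  next
    case (Suc i)
    then have "s ((s^^i) y) = s ((s^^(i + Suc d)) y)" by simp
    then have "(s^^i) y = (s^^(i + Suc d)) y" using inj_onD[OF inj _ pw pw] by blast
    then show ?case using Suc.IH by blast
  qed
  then have "(s^^Suc d) y = y" using id by metis
  then show ?thesis by (metis funpow_Suc_right o_apply)
qed

lemma degree_empty[simp]: "degree {} v = 0"
  unfolding degree_def by simp

lemma degree_insert:
  "finite B \<Longrightarrow> degree (insert a B) v = (if v \<in> a \<and> a \<notin> B then 1 else 0) + degree B v"
proof -
  assume fin: "finite B"
  have "{e \<in> insert a B. v \<in> e} = (if v \<in> a then insert a {e\<in>B. v \<in> e} else {e\<in>B. v \<in> e})"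
    by auto
  then show ?thesis unfolding degree_def using fin by (auto simp: card_insert_if)
qed

lemma switch_degree:
  assumes "R \<subseteq> H" "A \<inter> H \<subseteq> R" "finite H" "finite A"
  shows "degree ((H - R) \<union> A) v = degree H v - degree R v + degree A v \<and> degree R v \<le> degree H v"
proof -
  have eq: "{e\<in>(H - R) \<union> A. v\<in>e} = ({e\<in>H. v\<in>e} - {e\<in>R. v\<in>e}) \<union> {e\<in>A. v\<in>e}" by auto
  have disj: "({e\<in>H. v\<in>e} - {e\<in>R. v\<in>e}) \<inter> {e\<in>A. v\<in>e} = {}" using assms(2) by auto
  have sub: "{e\<in>R. v\<in>e} \<subseteq> {e\<in>H. v\<in>e}" using assms(1) by auto
  have f: "finite {e\<in>H. v\<in>e}" "finite {e\<in>A. v\<in>e}" using assms(3,4) by auto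
  show ?thesis unfolding degree_def eq
    using card_Un_disjoint[OF _ f(2) disj] card_Diff_subset[OF finite_subset[OF sub f(1)] sub]
      card_mono[OF f(1) sub] f by auto
qed




theorem lemma11:
  fixes V :: "'a set" and E F F' :: "'a set set" and x :: 'a
  assumes "simple_graph V E"
    and "two_factor V E F"
    and "\<forall>F2. two_factor V E F2 \<longrightarrow> num_components V F \<le> num_components V F2"
    and "x \<in> V"
    and "two_factor (V - {x}) (del_edges E x) F'"
    and "num_components (V - {x}) F' < num_components V F"
  shows "int (degree E x) \<le> int (alpha V E) - 1"
proof -
  define W where "W = V - {x}"
  have sg: "wfg V E" using assms(1) unfolding simple_graph_def wfg_def by (rule conjunct2)
  have finV: "finite V" using assms(1) unfolding simple_graph_def by (rule conjunct1)
  have "E \<subseteq> Pow V"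
  proof
    fix e assume "e \<in> E"
    then obtain p q where "e = {p,q}" "p \<in> V" "q \<in> V" using sg unfolding wfg_def by blast
    then show "e \<in> Pow V" by simp
  qed
  then have finE: "finite E" by (rule finite_subset) (use finV in simp)
  have F'E: "F' \<subseteq> E" using assms(5) unfolding two_factor_def del_edges_def by blast
  have F'x: "x \<notin> e" if "e \<in> F'" for e
  proof -
    have "F' \<subseteq> del_edges E x" using assms(5) unfolding two_factor_def by blast
    then show ?thesis using that unfolding del_edges_def by blast
  qed
  have finF': "finite F'" using finite_subset[OF F'E finE] .
  have xW: "x \<notin> W" unfolding W_def by simp
  have WV: "W \<subseteq> V" unfolding W_def by blast
  have finW: "finite W" using finV W_def by simp
  have wfF': "wfg W F'"
    unfolding wfg_def
  proof
    fix e assume e: "e \<in> F'"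
    then have "e \<in> E" using F'E by blast
    then obtain p q where pq: "e = {p,q}" "p \<noteq> q" "p \<in> V" "q \<in> V"
      using sg unfolding wfg_def by blast
    moreover have "x \<noteq> p" "x \<noteq> q" using F'x[OF e] pq(1) by auto
    ultimately show "\<exists>u v. e = {u,v} \<and> u \<noteq> v \<and> u \<in> W \<and> v \<in> W" unfolding W_def by blast
  qed
  have degF'W: "degree F' v = 2" if "v \<in> W" for v
    using assms(5) that unfolding two_factor_def W_def by blast
  have degF'x: "degree F' x = 0"
  proof -
    have "{e\<in>F'. x \<in> e} = {}" using F'x by blast
    then show ?thesis unfolding degree_def by (metis card.empty)
  qed
  have deg2: "\<forall>v\<in>W. card (nbr F' v) = 2"
  proof
    fix v assume "v \<in> W"
    then show "card (nbr F' v) = 2" using degF'W degree_nbr[OF wfF', of v] by simp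
  qed
  obtain s where s: "orient W F' s" using orient_exists[OF finW wfF' deg2] by blast
  have sn: "s w \<in> nbr F' w" "s (s w) \<noteq> w" if "w \<in> W" for w
    using s that unfolding orient_def by blast+
  have sW: "s w \<in> W" "s w \<noteq> w" if "w \<in> W" for w
    using nbr_W[OF wfF' sn(1)[OF that]] by auto
  have inj: "inj_on s W" using s unfolding orient_def by blast
  have sWall: "\<forall>w\<in>W. s w \<in> W" using sW(1) by blast
  have edgeF': "{w, s w} \<in> F'" if "w \<in> W" for w
    using sn(1)[OF that] unfolding nbr_def by simp
  have cover: "a \<in> W \<and> b \<in> W \<and> (b = s a \<or> a = s b)" if "{a,b} \<in> F'" for a b
  proof -
    have "b \<in> nbr F' a" using that unfolding nbr_def by simp
    then show ?thesis using nbr_W[OF wfF'] orient_cover[OF finW wfF' deg2 s] by metis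
  qed
  have lift: "reach F2 u w" if hw: "\<forall>w\<in>W. reach F2 w (s w)" and r: "reach F' u w" for F2 u w
  proof -
    have "(\<lambda>u v. {u, v} \<in> F')\<^sup>*\<^sup>* u w" using r unfolding reach_def .
    then show ?thesis
    proof (induction rule: rtranclp.induct)
      case (rtrancl_refl a) then show ?case by (rule reach_refl)
    next
      case (rtrancl_into_rtrancl a b c)
      have "reach F2 b c"
      proof -
        have cv: "b \<in> W" "c \<in> W" "c = s b \<or> b = s c" using cover[OF rtrancl_into_rtrancl(2)] by auto
        show ?thesis
        proof (cases "c = s b")
          case True then show ?thesis using hw cv by simp
        next
          case False then have "b = s c" using cv by simp
          then have "reach F2 c b" using hw cv by simp
          then show ?thesis by (rule reach_sym)
        qed
      qed
      then show ?case using rtrancl_into_rtrancl(3) reach_trans by metis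
    qed
  qed
  have contra: False if tf: "two_factor V E F2" and toW: "\<forall>v\<in>V. \<exists>w\<in>W. reach F2 v w"
      and hw: "\<forall>w\<in>W. reach F2 w (s w)" for F2
  proof -
    have "\<forall>u\<in>W. \<forall>w\<in>W. reach F' u w \<longrightarrow> reach F2 u w" using lift[OF hw] by blast
    then have "num_components V F2 \<le> num_components W F'"
      using comp_le[OF finW WV toW] by blast
    moreover have "num_components V F \<le> num_components V F2" using assms(3) tf by blast
    ultimately show False using assms(6) unfolding W_def by linarith
  qed
  define N where "N = nbr E x"
  have NW: "y \<in> W" if "y \<in> N" for y using nbr_W[OF sg, of y x] that unfolding N_def W_def by auto
  have xyE: "{x,y} \<in> E" if "y \<in> N" for y using that unfolding N_def nbr_def by simp
  have K1: "{x, s y} \<notin> E" if y: "y \<in> N" for y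
  proof
    assume E1: "{x, s y} \<in> E"
    define z where "z = s y"
    have yW: "y \<in> W" using NW y .
    have zW: "z \<in> W" "y \<noteq> z" "s z \<noteq> y" using sW[OF yW] sn(2)[OF yW] unfolding z_def by auto
    have yx: "y \<noteq> x" "z \<noteq> x" using yW zW xW by auto
    define R where "R = {{y,z}}"
    define A where "A = {{x,y},{x,z}}"
    define F2 where "F2 = (F' - R) \<union> A"
    have RF: "R \<subseteq> F'" using edgeF'[OF yW] unfolding R_def z_def by simp
    have AF: "A \<inter> F' \<subseteq> R" using F'x unfolding A_def by blast
    have finA: "finite A" unfolding A_def by simp
    have dR: "degree R v = (if v = y \<or> v = z then 1 else 0)" for v
      unfolding R_def by (simp add: degree_insert)
    have dA: "degree A v = (if v = x then 2 else if v = y \<or> v = z then 1 else 0)" for v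
      unfolding A_def using zW yx by (auto simp: degree_insert doubleton_eq_iff)
    have deg: "degree F2 v = 2" if "v \<in> V" for v
    proof -
      have sd: "degree F2 v = degree F' v - degree R v + degree A v"
        using switch_degree[OF RF AF finF' finA, of v] unfolding F2_def by blast
      show ?thesis
      proof (cases "v = x")
        case True then show ?thesis using sd degF'x dR dA yx by simp
      next
        case False then have "v \<in> W" using that W_def by simp
        then show ?thesis using sd degF'W dR dA False by simp
      qed
    qed
    have sub: "F2 \<subseteq> E" unfolding F2_def A_def using F'E xyE[OF y] E1 z_def by blast
    have tf: "two_factor V E F2" unfolding two_factor_def using sub deg by blast
    have xy2: "{x,y} \<in> F2" "{x,z} \<in> F2" unfolding F2_def A_def by auto
    have toW: "\<forall>v\<in>V. \<exists>w\<in>W. reach F2 v w"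
    proof
      fix v assume v: "v \<in> V"
      show "\<exists>w\<in>W. reach F2 v w"
      proof (cases "v = x")
        case True then show ?thesis using reach_edge[OF xy2(1)] yW by blast
      next
        case False then show ?thesis using v reach_refl unfolding W_def by fast
      qed
    qed
    have hw: "\<forall>w\<in>W. reach F2 w (s w)"
    proof
      fix w assume w: "w \<in> W"
      show "reach F2 w (s w)"
      proof (cases "w = y")
        case True
        have "reach F2 x y" using reach_edge[OF xy2(1)] .
        then have "reach F2 y x" by (rule reach_sym)
        moreover have "reach F2 x z" using reach_edge[OF xy2(2)] .
        ultimately show ?thesis using True reach_trans unfolding z_def by metis
      next
        case False
        have "{w, s w} \<noteq> {y,z}"
        proof
          assume "{w, s w} = {y,z}"
          then have "w = z" "s w = y" using False by (auto simp: doubleton_eq_iff)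
          then show False using zW by simp
        qed
        then have "{w, s w} \<in> F2" using edgeF'[OF w] unfolding F2_def R_def by simp
        then show ?thesis by (rule reach_edge)
      qed
    qed
    show False using contra[OF tf toW hw] .
  qed
  have K2: "{s y1, s y2} \<notin> E" if y: "y1 \<in> N" "y2 \<in> N" "y1 \<noteq> y2" for y1 y2
  proof
    assume E1: "{s y1, s y2} \<in> E"
    define z1 where "z1 = s y1"
    define z2 where "z2 = s y2"
    have yW: "y1 \<in> W" "y2 \<in> W" using NW y by auto
    have zW: "z1 \<in> W" "z2 \<in> W" "y1 \<noteq> z1" "y2 \<noteq> z2" "s z1 \<noteq> y1" "s z2 \<noteq> y2"
      using sW[OF yW(1)] sW[OF yW(2)] sn(2)[OF yW(1)] sn(2)[OF yW(2)] unfolding z1_def z2_def by auto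
    have z12: "z1 \<noteq> z2" using inj_onD[OF inj _ yW] y(3) unfolding z1_def z2_def by blast
    have nsw: "\<not> (z1 = y2 \<and> z2 = y1)" using zW(5) unfolding z2_def by auto
    have yx: "y1 \<noteq> x" "y2 \<noteq> x" "z1 \<noteq> x" "z2 \<noteq> x" using yW zW xW by auto
    define R where "R = {{y1,z1},{y2,z2}}"
    define A where "A = {{x,y1},{x,y2},{z1,z2}}"
    define F2 where "F2 = (F' - R) \<union> A"
    have RF: "R \<subseteq> F'" using edgeF'[OF yW(1)] edgeF'[OF yW(2)] unfolding R_def z1_def z2_def by simp
    have AF: "A \<inter> F' \<subseteq> R"
    proof
      fix e assume e: "e \<in> A \<inter> F'"
      then have "e = {z1,z2}" using F'x unfolding A_def by blast
      then have ee: "{z1,z2} \<in> F'" using e by blast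
      have "z2 = s z1 \<or> z1 = s z2" using cover[OF ee] by blast
      then show "e \<in> R"
      proof
        assume "z2 = s z1"
        then have "s z1 = s y2" unfolding z2_def by simp
        then have "z1 = y2" using inj_onD[OF inj _ zW(1) yW(2)] by blast
        then show ?thesis using \<open>e = {z1,z2}\<close> unfolding R_def by simp
      next
        assume "z1 = s z2"
        then have "s z2 = s y1" unfolding z1_def by simp
        then have "z2 = y1" using inj_onD[OF inj _ zW(2) yW(1)] by blast
        then show ?thesis using \<open>e = {z1,z2}\<close> insert_commute[of z1 y1] unfolding R_def by simp
      qed
    qed
    have finA: "finite A" unfolding A_def by simp
    have dR: "degree R v = (if v = y1 \<or> v = z1 then 1 else 0) + (if v = y2 \<or> v = z2 then 1 else 0)" for v
      unfolding R_def using y(3) nsw by (auto simp: degree_insert doubleton_eq_iff)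
    have dA: "degree A v = (if v = x \<or> v = y1 then 1 else 0) + (if v = x \<or> v = y2 then 1 else 0)
        + (if v = z1 \<or> v = z2 then 1 else 0)" for v
      unfolding A_def using y(3) yx by (auto simp: degree_insert doubleton_eq_iff)
    have deg: "degree F2 v = 2" if "v \<in> V" for v
    proof -
      have sd: "degree F2 v = degree F' v - degree R v + degree A v"
        using switch_degree[OF RF AF finF' finA, of v] unfolding F2_def by blast
      show ?thesis
      proof (cases "v = x")
        case True then show ?thesis using sd degF'x dR dA yx by simp
      next
        case False then have "v \<in> W" using that W_def by simp
        moreover have "degree R v = degree A v" using dR dA False zW y(3) z12 by auto
        moreover have "degree R v \<le> 2" using dR by simp
        ultimately show ?thesis using sd degF'W by simp
      qed
    qed
    have sub: "F2 \<subseteq> E" unfolding F2_def A_def using F'E xyE[OF y(1)] xyE[OF y(2)] E1 z1_def z2_def by blast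
    have tf: "two_factor V E F2" unfolding two_factor_def using sub deg by blast
    have xy2: "{x,y1} \<in> F2" "{x,y2} \<in> F2" unfolding F2_def A_def by auto
    have toW: "\<forall>v\<in>V. \<exists>w\<in>W. reach F2 v w"
    proof
      fix v assume v: "v \<in> V"
      show "\<exists>w\<in>W. reach F2 v w"
      proof (cases "v = x")
        case True then show ?thesis using reach_edge[OF xy2(1)] yW by blast
      next
        case False then show ?thesis using v reach_refl unfolding W_def by fast
      qed
    qed
    have other: "{w, s w} \<in> F2" if w: "w \<in> W" "w \<noteq> y1" "w \<noteq> y2" for w
    proof -
      have "{w, s w} \<noteq> {y1,z1}"
      proof
        assume "{w, s w} = {y1,z1}"
        then have "w = z1" "s w = y1" using w by (auto simp: doubleton_eq_iff)
        then show False using zW by simp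
      qed
      moreover have "{w, s w} \<noteq> {y2,z2}"
      proof
        assume "{w, s w} = {y2,z2}"
        then have "w = z2" "s w = y2" using w by (auto simp: doubleton_eq_iff)
        then show False using zW by simp
      qed
      ultimately show ?thesis using edgeF'[OF w(1)] unfolding F2_def R_def by simp
    qed
    have walkc: "\<forall>w\<in>W - {y1,y2}. s w \<in> W \<and> {w, s w} \<in> F2" using other sW by blast
    have y12: "reach F2 y1 y2"
    proof -
      have "reach F2 y1 x" using reach_sym[OF reach_edge[OF xy2(1)]] .
      then show ?thesis using reach_edge[OF xy2(2)] reach_trans by metis
    qed
    have toT: "reach F2 yi t" if "yi \<in> {y1,y2}" "t \<in> {y1,y2}" for yi t
      using that y12 reach_sym[OF y12] reach_refl by auto
    have hwy: "reach F2 yi (s yi)" if yi: "yi \<in> {y1,y2}" for yi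
    proof -
      have yiW: "yi \<in> W" using yi yW by auto
      obtain k where k: "(s^^k) (s yi) = yi" using orbit[OF finW sWall inj yiW] by blast
      then have "(s^^k) (s yi) \<in> {y1,y2}" using yi by simp
      then obtain t where t: "t \<in> {y1,y2}" "reach F2 (s yi) t"
        using walk[OF walkc sW(1)[OF yiW]] by blast
      have "reach F2 yi t" using toT[OF yi t(1)] .
      then show ?thesis using reach_sym[OF t(2)] reach_trans by metis
    qed
    have hw: "\<forall>w\<in>W. reach F2 w (s w)"
    proof
      fix w assume w: "w \<in> W"
      show "reach F2 w (s w)"
      proof (cases "w \<in> {y1,y2}")
        case True then show ?thesis by (rule hwy)
      next
        case False
        then have "w \<noteq> y1" "w \<noteq> y2" by auto
        then show ?thesis using other[OF w] reach_edge by metis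
      qed
    qed
    show False using contra[OF tf toW hw] .
  qed
  define S where "S = insert x (s ` N)"
  have NsubW: "N \<subseteq> W" using NW by blast
  have finN: "finite N" using finite_subset[OF NsubW finW] .
  have injN: "inj_on s N" using inj_on_subset[OF inj NsubW] .
  have xS: "x \<notin> s ` N"
  proof
    assume "x \<in> s ` N"
    then obtain y where y: "y \<in> N" "x = s y" by blast
    then show False using sW(1)[OF NW[OF y(1)]] xW by simp
  qed
  have cardS: "card S = Suc (card N)"
    unfolding S_def using xS finN card_image[OF injN] by simp
  have noloop: "{u,u} \<notin> E" for u
  proof
    assume uu: "{u,u} \<in> E"
    have "\<exists>p q. {u,u} = {p,q} \<and> p \<noteq> q \<and> p \<in> V \<and> q \<in> V"
      using bspec[OF sg[unfolded wfg_def] uu] .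
    then obtain p q where "{u,u} = {p,q}" "p \<noteq> q" by blast
    then show False by (auto simp: doubleton_eq_iff)
  qed
  have indep: "independent V E S"
    unfolding independent_def
  proof (intro conjI ballI)
    have "s ` N \<subseteq> W" using NsubW sWall by auto
    then show "S \<subseteq> V" unfolding S_def using assms(4) WV by blast
  next
    fix u v assume u: "u \<in> S" and v: "v \<in> S"
    show "{u,v} \<notin> E"
    proof (cases "u = v")
      case True then show ?thesis using noloop by simp
    next
      case False
      show ?thesis
      proof (cases "u = x")
        case True
        then obtain y where "y \<in> N" "v = s y" using v False unfolding S_def by blast
        then show ?thesis using K1 True by blast
      next
        case ux: False
        then obtain y1 where y1: "y1 \<in> N" "u = s y1" using u unfolding S_def by blast
        show ?thesis
        proof (cases "v = x")
          case True
          then have "{x, s y1} \<notin> E" using K1 y1 by blast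
          then show ?thesis using True y1 insert_commute[of x "s y1"] by simp
        next
          case False
          then obtain y2 where y2: "y2 \<in> N" "v = s y2" using v unfolding S_def by blast
          then have "y1 \<noteq> y2" using y1 \<open>u \<noteq> v\<close> by blast
          then show ?thesis using K2 y1 y2 by blast
        qed
      qed
    qed
  qed
  have fin_al: "finite {card S |S. independent V E S}"
  proof (rule finite_subset[of _ "{..card V}"])
    show "{card S |S. independent V E S} \<subseteq> {..card V}"
    proof
      fix n assume "n \<in> {card S |S. independent V E S}"
      then obtain S' where "n = card S'" "S' \<subseteq> V" unfolding independent_def by blast
      then show "n \<in> {..card V}" using card_mono[OF finV] by simp
    qed
  qed simp
  have "card S \<in> {card S |S. independent V E S}" using indep by blast
  then have "card S \<le> alpha V E" unfolding alpha_def using Max_ge[OF fin_al] by blast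
  moreover have "degree E x = card N" unfolding N_def using degree_nbr[OF sg] .
  ultimately show ?thesis using cardS by simp
qed


end
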